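(* Let $\omega_+$ be the quasi-free state described in the context, let $n\in\mathbb N$, and let $\Omega_n\in\mathbb C^{2n\times2n}$ be the Majorana correlation matrix $(\Omega_n)_{kl}=\omega_+(B(w^{(k)})B(w^{(l)}))$, $k,l=1,\dots,2n$. Then $$\Omega_n=1_{2n}+i\,T_n[a],\qquad a(\xi)=\frac2i\begin{bmatrix}s_0(\xi)-\frac12 & s_2(\xi)-is_3(\xi)\\ s_2(\xi)+is_3(\xi) & s_0(\xi)-\frac12\end{bmatrix},$$ where $T_n[a]$ is the $2\times2$ block Toeplitz matrix with symbol $a\in L^\infty_{2\times2}$; moreover $T_n[a]$ is real and skew-symmetric, $T_n[a]\in\mathbb R^{2n\times2n}$, $T_n[a]^t=-T_n[a]$.
   Context: $\mathfrak h=\ell^2(\mathbb Z)$; $b_x,b_x^*$ ($x\in\mathbb Z$) generate a CAR algebra: $\{b_x,b_y\}=0$, $\{b_x^*,b_y\}=\delta_{xy}$. For $f=(f_+,f_-)\in\mathfrak h\oplus\mathfrak h$, $B(f)=\sum_x(f_+(x)b_x^*+f_-(x)b_x)$. Vectors $w^{(k)}=(w^{(k)}_+,w^{(k)}_-)$, supported on $\{1,\dots,n\}$, are given for $j=1,\dots,n$ by $w_+^{(k)}(j)=\delta_{k,2j-1}-i\delta_{k,2j}$, $w_-^{(k)}(j)=\delta_{k,2j-1}+i\delta_{k,2j}$ (so $B(w^{(2j-1)})=b_j^*+b_j$, $B(w^{(2j)})=i(b_j-b_j^* )$). Parameters: $\beta_L,\beta_R>0$, $\beta=\frac12(\beta_R+\beta_L)$,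 $\delta=\frac12(\beta_R-\beta_L)$, $\gamma\in(-1,1)$, $\lambda\in\mathbb R$; $\kappa(\xi)=2\lambda\sin\xi-(1-\gamma^2)\sin2\xi$, $\mu(\xi)=((\cos\xi-\lambda)^2+\gamma^2\sin^2\xi)^{1/2}$, $\varphi_{\alpha,\alpha'}=\sinh(\alpha\mu)/(\cosh(\alpha\mu)+\cosh(\alpha'\mu))$. Define $s_0=\frac12-\frac12\varphi_{\delta,\beta}\operatorname{sign}\kappa$, $s_1=0$, $s_2=\frac12\varphi_{\beta,\delta}\gamma\sin\xi/\mu$, $s_3=-\frac12\varphi_{\beta,\delta}(\cos\xi-\lambda)/\mu$, and $s(\xi)=\sum_{k=0}^3s_k(\xi)\sigma_k$ ($\sigma_0=1_2$, $\sigma_{1,2,3}$ Pauli matrices). $\omega_+$ is the quasi-free state (odd moments of $B$'s vanish, even moments given by the signed sum over pairings of two-point functions) with $\omega_+(B^*(f)B(g))=(f,Sg)$, where $S$ is the operator on $\ell^2(\mathbb Z)\otimes\mathbb C^2$ which, under $Ff(\xi)=\sum_xf(x)e^{ix\xi}$, is multiplication by $s(\xi)$. Block Toeplitz convention: for $a\in L^\infty_{N\times N}$ (essentially bounded $N\times N$ matrix functions on the unit circle), $a_x=\int_0^{2\pi}\frac{d\xi}{2\pi}a(\xi)e^{-ix\xi}\in\mathbb C^{N\times N}$, and $T_n[a]$ is the $Nn\times Nn$ matrix whose $(i,j)$-th $N\times N$ block is $a_{i-j}$, $i,j=1,\dots,n$. *)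

theory Defs
  imports "HOL-Analysis.Analysis"
begin

definition kappa :: "real \<Rightarrow> real \<Rightarrow> real \<Rightarrow> real" where
  "kappa gam lam \<xi> = 2 * lam * sin \<xi> - (1 - gam^2) * sin (2 * \<xi>)"

definition mu :: "real \<Rightarrow> real \<Rightarrow> real \<Rightarrow> real" where
  "mu gam lam \<xi> = sqrt ((cos \<xi> - lam)^2 + gam^2 * (sin \<xi>)^2)"

definition phi :: "real \<Rightarrow> real \<Rightarrow> real \<Rightarrow> real" where
  "phi al al' m = sinh (al * m) / (cosh (al * m) + cosh (al' * m))"

definition beta_avg :: "real \<Rightarrow> real \<Rightarrow> real" where
  "beta_avg bL bR = (bR + bL) / 2"

definition delta_diff :: "real \<Rightarrow> real \<Rightarrow> real" where
  "delta_diff bL bR = (bR - bL) / 2"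

definition s0 :: "real \<Rightarrow> real \<Rightarrow> real \<Rightarrow> real \<Rightarrow> real \<Rightarrow> real" where
  "s0 bL bR gam lam \<xi> =
     1/2 - 1/2 * phi (delta_diff bL bR) (beta_avg bL bR) (mu gam lam \<xi>) * sgn (kappa gam lam \<xi>)"

definition s1 :: "real \<Rightarrow> real \<Rightarrow> real \<Rightarrow> real \<Rightarrow> real \<Rightarrow> real" where
  "s1 bL bR gam lam \<xi> = 0"

definition s2 :: "real \<Rightarrow> real \<Rightarrow> real \<Rightarrow> real \<Rightarrow> real \<Rightarrow> real" where
  "s2 bL bR gam lam \<xi> =
     1/2 * phi (beta_avg bL bR) (delta_diff bL bR) (mu gam lam \<xi>) * gam * sin \<xi> / mu gam lam \<xi>"

definition s3 :: "real \<Rightarrow> real \<Rightarrow> real \<Rightarrow> real \<Rightarrow> real \<Rightarrow> real" where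
  "s3 bL bR gam lam \<xi> =
     - 1/2 * phi (beta_avg bL bR) (delta_diff bL bR) (mu gam lam \<xi>) * (cos \<xi> - lam) / mu gam lam \<xi>"

text \<open>2x2 matrices are functions nat => nat => complex with indices 0,1.
  s = s0 sigma0 + s1 sigma1 + s2 sigma2 + s3 sigma3; index 0 is the "+" component,
  index 1 the "-" component.\<close>

definition s_mat :: "real \<Rightarrow> real \<Rightarrow> real \<Rightarrow> real \<Rightarrow> real \<Rightarrow> nat \<Rightarrow> nat \<Rightarrow> complex" where
  "s_mat bL bR gam lam \<xi> r c =
     (let a0 = complex_of_real (s0 bL bR gam lam \<xi>); a1 = complex_of_real (s1 bL bR gam lam \<xi>);
          a2 = complex_of_real (s2 bL bR gam lam \<xi>); a3 = complex_of_real (s3 bL bR gam lam \<xi>)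
      in if r = 0 \<and> c = 0 then a0 + a3
         else if r = 0 \<and> c = 1 then a1 - \<i> * a2
         else if r = 1 \<and> c = 0 then a1 + \<i> * a2
         else if r = 1 \<and> c = 1 then a0 - a3 else 0)"

definition a_sym :: "real \<Rightarrow> real \<Rightarrow> real \<Rightarrow> real \<Rightarrow> real \<Rightarrow> nat \<Rightarrow> nat \<Rightarrow> complex" where
  "a_sym bL bR gam lam \<xi> r c =
     (let a0 = complex_of_real (s0 bL bR gam lam \<xi>);
          a2 = complex_of_real (s2 bL bR gam lam \<xi>); a3 = complex_of_real (s3 bL bR gam lam \<xi>)
      in (2 / \<i>) *
         (if r = 0 \<and> c = 0 then a0 - 1/2
          else if r = 0 \<and> c = 1 then a2 - \<i> * a3
          else if r = 1 \<and> c = 0 then a2 + \<i> * a3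
          else if r = 1 \<and> c = 1 then a0 - 1/2 else 0))"

definition fourier_coeff :: "(real \<Rightarrow> complex) \<Rightarrow> int \<Rightarrow> complex" where
  "fourier_coeff h x = (1 / (2 * pi)) * integral {0..2*pi} (\<lambda>\<xi>. h \<xi> * exp (- \<i> * of_int x * \<xi>))"

text \<open>T_n[a] for an N x N matrix symbol a; entries indexed by k, l in {1..N*n}:
  the (i,j)-th block (i = (k-1) div N + 1, j = (l-1) div N + 1) is a_{i-j}, and inside it
  the entry ((k-1) mod N, (l-1) mod N).\<close>

definition block_toeplitz :: "nat \<Rightarrow> nat \<Rightarrow> (real \<Rightarrow> nat \<Rightarrow> nat \<Rightarrow> complex) \<Rightarrow> nat \<Rightarrow> nat \<Rightarrow> complex" where
  "block_toeplitz N n a k l =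
     fourier_coeff (\<lambda>\<xi>. a \<xi> ((k - 1) mod N) ((l - 1) mod N))
                   (int ((k - 1) div N) - int ((l - 1) div N))"

type_synonym hvec = "(int \<Rightarrow> complex) \<times> (int \<Rightarrow> complex)"

definition supp_h :: "hvec \<Rightarrow> int set" where
  "supp_h f = {x. fst f x \<noteq> 0 \<or> snd f x \<noteq> 0}"

definition fin_supp :: "hvec \<Rightarrow> bool" where
  "fin_supp f \<longleftrightarrow> finite (supp_h f)"

definition inner_h :: "hvec \<Rightarrow> hvec \<Rightarrow> complex" where
  "inner_h f g = (\<Sum>x\<in>supp_h f. cnj (fst f x) * fst g x + cnj (snd f x) * snd g x)"

definition ft :: "(int \<Rightarrow> complex) \<Rightarrow> real \<Rightarrow> complex" where
  "ft h \<xi> = (\<Sum>x\<in>{x. h x \<noteq> 0}. h x * exp (\<i> * of_int x * \<xi>))"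

definition S_op :: "(real \<Rightarrow> nat \<Rightarrow> nat \<Rightarrow> complex) \<Rightarrow> hvec \<Rightarrow> hvec" where
  "S_op s g =
     ((\<lambda>x. fourier_coeff (\<lambda>\<xi>. s \<xi> 0 0 * ft (fst g) \<xi> + s \<xi> 0 1 * ft (snd g) \<xi>) x),
      (\<lambda>x. fourier_coeff (\<lambda>\<xi>. s \<xi> 1 0 * ft (fst g) \<xi> + s \<xi> 1 1 * ft (snd g) \<xi>) x))"

text \<open>The algebra is a ring 'a with a central embedding sc of the complex scalars, an
  involution st (the adjoint), generators b x, and a state om.  B(f) is defined for
  finitely supported f.\<close>

definition Bop :: "(complex \<Rightarrow> 'a::ring_1) \<Rightarrow> ('a \<Rightarrow> 'a) \<Rightarrow> (int \<Rightarrow> 'a) \<Rightarrow> hvec \<Rightarrow> 'a" where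
  "Bop sc st b f = (\<Sum>x\<in>supp_h f. sc (fst f x) * st (b x) + sc (snd f x) * b x)"

definition Bprod :: "(complex \<Rightarrow> 'a::ring_1) \<Rightarrow> ('a \<Rightarrow> 'a) \<Rightarrow> (int \<Rightarrow> 'a) \<Rightarrow> hvec list \<Rightarrow> 'a" where
  "Bprod sc st b fs = foldr (\<lambda>f p. Bop sc st b f * p) fs 1"

definition star_algebra :: "(complex \<Rightarrow> 'a::ring_1) \<Rightarrow> ('a \<Rightarrow> 'a) \<Rightarrow> bool" where
  "star_algebra sc st \<longleftrightarrow>
     (\<forall>c d. sc (c + d) = sc c + sc d) \<and> (\<forall>c d. sc (c * d) = sc c * sc d) \<and> sc 1 = 1 \<and>
     (\<forall>c a. sc c * a = a * sc c) \<and>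
     (\<forall>a a'. st (a + a') = st a + st a') \<and> (\<forall>a a'. st (a * a') = st a' * st a) \<and>
     (\<forall>a. st (st a) = a) \<and> (\<forall>c. st (sc c) = sc (cnj c))"

definition CAR_generators :: "(complex \<Rightarrow> 'a::ring_1) \<Rightarrow> ('a \<Rightarrow> 'a) \<Rightarrow> (int \<Rightarrow> 'a) \<Rightarrow> bool" where
  "CAR_generators sc st b \<longleftrightarrow>
     (\<forall>x y. b x * b y + b y * b x = 0) \<and>
     (\<forall>x y. st (b x) * b y + b y * st (b x) = sc (if x = y then 1 else 0))"

definition is_state :: "(complex \<Rightarrow> 'a::ring_1) \<Rightarrow> ('a \<Rightarrow> 'a) \<Rightarrow> ('a \<Rightarrow> complex) \<Rightarrow> bool" where
  "is_state sc st om \<longleftrightarrow>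
     (\<forall>a a'. om (a + a') = om a + om a') \<and> (\<forall>c a. om (sc c * a) = c * om a) \<and>
     om 1 = 1 \<and> (\<forall>a. Im (om (st a * a)) = 0 \<and> Re (om (st a * a)) \<ge> 0)"

text \<open>Quasi-free with two-point operator S: omega(B*(f)B(g)) = (f, S g), and the moments
  of B's are given by the signed sum over pairings, written via its recursive expansion
  along the first factor (this also forces all odd moments to vanish).\<close>

definition quasi_free :: "(complex \<Rightarrow> 'a::ring_1) \<Rightarrow> ('a \<Rightarrow> 'a) \<Rightarrow> (int \<Rightarrow> 'a) \<Rightarrow> ('a \<Rightarrow> complex)
    \<Rightarrow> (real \<Rightarrow> nat \<Rightarrow> nat \<Rightarrow> complex) \<Rightarrow> bool" where
  "quasi_free sc st b om s \<longleftrightarrow>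
     (\<forall>f g. fin_supp f \<longrightarrow> fin_supp g \<longrightarrow>
        om (st (Bop sc st b f) * Bop sc st b g) = inner_h f (S_op s g)) \<and>
     (\<forall>f fs. fin_supp f \<longrightarrow> (\<forall>g\<in>set fs. fin_supp g) \<longrightarrow>
        om (Bprod sc st b (f # fs)) =
          (\<Sum>j<length fs. (-1)^j * om (Bop sc st b f * Bop sc st b (fs ! j))
                             * om (Bprod sc st b (take j fs @ drop (Suc j) fs))))"

definition w_vec :: "nat \<Rightarrow> hvec" where
  "w_vec k =
     ((\<lambda>j. (if int k = 2*j - 1 then 1 else 0) - \<i> * (if int k = 2*j then 1 else 0)),
      (\<lambda>j. (if int k = 2*j - 1 then 1 else 0) + \<i> * (if int k = 2*j then 1 else 0)))"

end

theory Submission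
  imports Defs
begin

definition PI :: "(real \<Rightarrow> complex) \<Rightarrow> bool" where
  "PI f \<longleftrightarrow> (\<forall>m::int. (\<lambda>\<xi>. f \<xi> * exp (- \<i> * of_int m * of_real \<xi>)) integrable_on {0..2*pi})"

lemma PI_add: "PI f \<Longrightarrow> PI g \<Longrightarrow> PI (\<lambda>\<xi>. f \<xi> + g \<xi>)"
  unfolding PI_def by (auto simp: distrib_right intro: integrable_add)

lemma PI_cmult: "PI f \<Longrightarrow> PI (\<lambda>\<xi>. c * f \<xi>)"
  unfolding PI_def by (auto simp: mult.assoc intro: integrable_on_mult_right)

lemma PI_const: "PI (\<lambda>\<xi>. c)"
  unfolding PI_def by (auto intro!: integrable_continuous_interval continuous_intros)

lemma meas_cont: "continuous_on UNIV f \<Longrightarrow> f \<in> borel_measurable (lebesgue_on {0..2*pi})"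
  by (rule continuous_imp_measurable_on_sets_lebesgue) (auto intro: continuous_on_subset)

lemma PI_real:
  fixes g :: "real \<Rightarrow> real"
  assumes g: "g \<in> borel_measurable (lebesgue_on {0..2*pi})" and B: "\<And>\<xi>. \<bar>g \<xi>\<bar> \<le> B"
  shows "PI (\<lambda>\<xi>. of_real (g \<xi>))"
  unfolding PI_def
proof
  fix m :: int
  have "(\<lambda>\<xi>. complex_of_real (g \<xi>) * exp (- \<i> * of_int m * of_real \<xi>)) absolutely_integrable_on {0..2*pi}"
  proof (rule measurable_bounded_by_integrable_imp_absolutely_integrable)
    show "(\<lambda>\<xi>. complex_of_real (g \<xi>) * exp (- \<i> * of_int m * of_real \<xi>)) \<in> borel_measurable (lebesgue_on {0..2*pi})"
    proof (rule borel_measurable_times)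
      show "(\<lambda>\<xi>. complex_of_real (g \<xi>)) \<in> borel_measurable (lebesgue_on {0..2*pi})"
        using measurable_compose[OF g borel_measurable_of_real] by simp
      show "(\<lambda>\<xi>. exp (- \<i> * of_int m * of_real \<xi>)) \<in> borel_measurable (lebesgue_on {0..2*pi})"
        by (intro meas_cont continuous_intros)
    qed
    show "(\<lambda>x. B) integrable_on {0..2*pi}" by (rule integrable_continuous_interval) (simp add: continuous_on_const)
    show "norm (complex_of_real (g x) * exp (- \<i> * of_int m * of_real x)) \<le> B" for x
      using B[of x] by (simp add: norm_mult norm_exp_eq_Re)
  qed auto
  then show "(\<lambda>\<xi>. complex_of_real (g \<xi>) * exp (- \<i> * of_int m * of_real \<xi>)) integrable_on {0..2*pi}"
    using absolutely_integrable_on_def by blast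
qed

lemma FC_add: "PI f \<Longrightarrow> PI g \<Longrightarrow> fourier_coeff (\<lambda>\<xi>. f \<xi> + g \<xi>) m = fourier_coeff f m + fourier_coeff g m"
  unfolding PI_def fourier_coeff_def by (simp add: distrib_right integral_add distrib_left)

lemma FC_diff: "PI f \<Longrightarrow> PI g \<Longrightarrow> fourier_coeff (\<lambda>\<xi>. f \<xi> - g \<xi>) m = fourier_coeff f m - fourier_coeff g m"
  unfolding PI_def fourier_coeff_def by (simp add: left_diff_distrib integral_diff right_diff_distrib)

lemma FC_cmult: "fourier_coeff (\<lambda>\<xi>. c * f \<xi>) m = c * fourier_coeff f m"
  unfolding fourier_coeff_def by (simp add: mult.assoc)

lemma FC_shift: "fourier_coeff (\<lambda>\<xi>. G \<xi> * exp (\<i> * of_int q * of_real \<xi>)) x = fourier_coeff G (x - q)"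
proof -
  have e: "exp (\<i> * (of_int q * of_real \<xi>)) * exp (- \<i> * (of_int x * of_real \<xi>)) =
        exp (- \<i> * (of_int (x - q) * of_real \<xi>))" for \<xi>
    by (simp add: exp_add[symmetric] algebra_simps)
  show ?thesis unfolding fourier_coeff_def by (simp only: mult.assoc e)
qed

lemma exp_deriv_c:
  fixes c :: complex and x :: real
  assumes c0: "c \<noteq> 0"
  shows "((\<lambda>\<xi>::real. exp (c * of_real \<xi>) / c) has_vector_derivative exp (c * of_real x)) (at x within S)"
proof -
  have "((\<lambda>z. exp (c * z)) has_field_derivative exp (c * of_real x) * c) (at (of_real x))"
    using DERIV_chain2[OF DERIV_exp DERIV_cmult_Id[of c]] by simp
  then have "((\<lambda>z. exp (c * z) / c) has_field_derivative exp (c * of_real x) * c / c) (at (of_real x))"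
    by (rule DERIV_cdivide)
  then have "((\<lambda>z. exp (c * z) / c) has_field_derivative exp (c * of_real x)) (at (of_real x))"
    using c0 by simp
  then show ?thesis
    by (rule has_vector_derivative_at_within[OF has_vector_derivative_real_field])
qed

lemma FC_one: "fourier_coeff (\<lambda>\<xi>. 1) m = (if m = 0 then 1 else 0)"
proof (cases "m = 0")
  case True then show ?thesis by (simp add: fourier_coeff_def scaleR_conv_of_real)
next
  case False
  define c where "c = - \<i> * of_int m"
  have c0: "c \<noteq> 0" using False by (simp add: c_def)
  have hi: "((\<lambda>\<xi>::real. exp (c * of_real \<xi>)) has_integral
        (exp (c * of_real (2*pi)) / c - exp (c * of_real 0) / c)) {0..2*pi}"
    by (rule fundamental_theorem_of_calculus) (auto intro: exp_deriv_c[OF c0])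
  have eq: "c * of_real (2*pi) = (2 * of_int (- m) * of_real pi) * \<i>" by (simp add: c_def)
  have e1: "exp (c * of_real (2*pi)) = 1"
    unfolding eq using exp_integer_2pi[of "of_int (- m)"] by simp
  have "integral {0..2*pi} (\<lambda>\<xi>::real. exp (c * of_real \<xi>)) = 0"
    using integral_unique[OF hi] e1 by simp
  then show ?thesis using False by (simp add: fourier_coeff_def c_def)
qed

lemma cosh_sum_ne0: "cosh a + cosh b \<noteq> (0::real)"
  using cosh_real_pos[of a] cosh_real_pos[of b] by linarith

lemma abs_sinh_le_cosh: "\<bar>sinh (x::real)\<bar> \<le> cosh x"
  using sinh_le_cosh_real[of x] sinh_le_cosh_real[of "-x"] by (simp add: abs_le_iff)

lemma abs_phi_le: "\<bar>phi a b m\<bar> \<le> 1"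
proof -
  have "\<bar>sinh (a*m)\<bar> \<le> cosh (a*m) + cosh (b*m)"
    using abs_sinh_le_cosh[of "a*m"] cosh_real_pos[of "b*m"] by linarith
  moreover have "cosh (a*m) + cosh (b*m) > 0"
    using cosh_real_pos[of "a*m"] cosh_real_pos[of "b*m"] by linarith
  ultimately show ?thesis unfolding phi_def by (simp add: abs_divide)
qed

lemma ratio_le1: "\<bar>y\<bar> \<le> (m::real) \<Longrightarrow> \<bar>y / m\<bar> \<le> 1"
  by (cases "m = 0") (auto simp: abs_divide divide_le_eq_1)

lemma abs_le_sqrt2: "\<bar>y\<bar> \<le> sqrt (x\<^sup>2 + y\<^sup>2)"
  using real_sqrt_sum_squares_ge2[of x "\<bar>y\<bar>"] by simp

lemma abs_le_sqrt1: "\<bar>x\<bar> \<le> sqrt (x\<^sup>2 + y\<^sup>2)"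
  using real_sqrt_sum_squares_ge1[of "\<bar>x\<bar>" y] by simp

lemma s0_bound: "\<bar>s0 bL bR gam lam \<xi>\<bar> \<le> 1"
proof -
  have "\<bar>phi (delta_diff bL bR) (beta_avg bL bR) (mu gam lam \<xi>) * sgn (kappa gam lam \<xi>)\<bar> \<le> 1"
  proof -
    have "\<bar>sgn (kappa gam lam \<xi>)\<bar> \<le> (1::real)" by (simp add: sgn_real_def)
    then show ?thesis unfolding abs_mult by (rule mult_le_one[OF abs_phi_le abs_ge_zero])
  qed
  then show ?thesis unfolding s0_def by linarith
qed

lemma s2_bound: "\<bar>s2 bL bR gam lam \<xi>\<bar> \<le> 1"
proof -
  have e: "s2 bL bR gam lam \<xi> = 1/2 * phi (beta_avg bL bR) (delta_diff bL bR) (mu gam lam \<xi>) * ((gam * sin \<xi>) / mu gam lam \<xi>)"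
    unfolding s2_def by simp
  have "\<bar>gam * sin \<xi>\<bar> \<le> mu gam lam \<xi>"
    unfolding mu_def using abs_le_sqrt2[where x="cos \<xi> - lam" and y="gam * sin \<xi>"] by (simp only: power_mult_distrib)
  then have r: "\<bar>(gam * sin \<xi>) / mu gam lam \<xi>\<bar> \<le> 1" by (rule ratio_le1)
  have "\<bar>phi (beta_avg bL bR) (delta_diff bL bR) (mu gam lam \<xi>)\<bar> * \<bar>(gam * sin \<xi>) / mu gam lam \<xi>\<bar> \<le> 1"
    by (rule mult_le_one[OF abs_phi_le abs_ge_zero r])
  then show ?thesis unfolding e abs_mult by (simp add: mult.assoc)
qed

lemma s3_bound: "\<bar>s3 bL bR gam lam \<xi>\<bar> \<le> 1"
proof -
  have e: "s3 bL bR gam lam \<xi> = -1/2 * phi (beta_avg bL bR) (delta_diff bL bR) (mu gam lam \<xi>) * ((cos \<xi> - lam) / mu gam lam \<xi>)"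
    unfolding s3_def by simp
  have "\<bar>cos \<xi> - lam\<bar> \<le> mu gam lam \<xi>"
    unfolding mu_def using abs_le_sqrt1[of "cos \<xi> - lam" "gam * sin \<xi>"] by (simp only: power_mult_distrib)
  then have r: "\<bar>(cos \<xi> - lam) / mu gam lam \<xi>\<bar> \<le> 1" by (rule ratio_le1)
  have "\<bar>phi (beta_avg bL bR) (delta_diff bL bR) (mu gam lam \<xi>)\<bar> * \<bar>(cos \<xi> - lam) / mu gam lam \<xi>\<bar> \<le> 1"
    by (rule mult_le_one[OF abs_phi_le abs_ge_zero r])
  then show ?thesis unfolding e abs_mult by (simp add: mult.assoc)
qed

lemma phi_mu_cont: "continuous_on UNIV (\<lambda>\<xi>. phi a b (mu gam lam \<xi>))"
  unfolding phi_def mu_def by (intro continuous_intros) (simp add: cosh_sum_ne0)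

lemma s0_meas: "s0 bL bR gam lam \<in> borel_measurable (lebesgue_on {0..2*pi})"
proof -
  have k: "(\<lambda>\<xi>. sgn (kappa gam lam \<xi>)) \<in> borel_measurable (lebesgue_on {0..2*pi})"
  proof -
    have c: "continuous_on UNIV (kappa gam lam)" unfolding kappa_def[abs_def] by (intro continuous_intros)
    show ?thesis using measurable_compose[OF meas_cont[OF c] borel_measurable_sgn] by simp
  qed
  have p: "(\<lambda>\<xi>. phi (delta_diff bL bR) (beta_avg bL bR) (mu gam lam \<xi>)) \<in> borel_measurable (lebesgue_on {0..2*pi})"
    by (rule meas_cont[OF phi_mu_cont])
  have "(\<lambda>\<xi>. 1/2 - 1/2 * phi (delta_diff bL bR) (beta_avg bL bR) (mu gam lam \<xi>) * sgn (kappa gam lam \<xi>)) \<in> borel_measurable (lebesgue_on {0..2*pi})"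
    by (rule borel_measurable_diff[OF borel_measurable_const borel_measurable_times[OF borel_measurable_times[OF borel_measurable_const p] k]])
  then show ?thesis unfolding s0_def[abs_def] .
qed

lemma s2_meas: "s2 bL bR gam lam \<in> borel_measurable (lebesgue_on {0..2*pi})"
  unfolding s2_def[abs_def]
  by (intro borel_measurable_divide borel_measurable_times borel_measurable_const meas_cont phi_mu_cont
      continuous_intros) (simp add: mu_def continuous_intros)

lemma s3_meas: "s3 bL bR gam lam \<in> borel_measurable (lebesgue_on {0..2*pi})"
  unfolding s3_def[abs_def]
  by (intro borel_measurable_divide borel_measurable_times borel_measurable_const meas_cont phi_mu_cont
      continuous_intros) (simp add: mu_def continuous_intros)

lemma PI_s0: "PI (\<lambda>\<xi>. complex_of_real (s0 bL bR gam lam \<xi>))"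
  by (rule PI_real[OF s0_meas s0_bound])
lemma PI_s2: "PI (\<lambda>\<xi>. complex_of_real (s2 bL bR gam lam \<xi>))"
  by (rule PI_real[OF s2_meas s2_bound])
lemma PI_s3: "PI (\<lambda>\<xi>. complex_of_real (s3 bL bR gam lam \<xi>))"
  by (rule PI_real[OF s3_meas s3_bound])

definition wp :: "nat \<Rightarrow> complex" where "wp c = (if c = 0 then 1 else - \<i>)"
definition wm :: "nat \<Rightarrow> complex" where "wm c = (if c = 0 then 1 else \<i>)"

lemma wp_ne0: "wp c \<noteq> 0" by (simp add: wp_def)
lemma wm_ne0: "wm c \<noteq> 0" by (simp add: wm_def)
lemma cnj_wp: "cnj (wp c) = wm c" by (simp add: wp_def wm_def)
lemma cnj_wm: "cnj (wm c) = wp c" by (simp add: wp_def wm_def)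

lemma w_fst: "c < 2 \<Longrightarrow> fst (w_vec (2*q + c + 1)) = (\<lambda>x. if x = int q + 1 then wp c else 0)"
  by (rule ext) (auto simp: w_vec_def wp_def)

lemma w_snd: "c < 2 \<Longrightarrow> snd (w_vec (2*q + c + 1)) = (\<lambda>x. if x = int q + 1 then wm c else 0)"
  by (rule ext) (auto simp: w_vec_def wm_def)

lemma supp_w: "c < 2 \<Longrightarrow> supp_h (w_vec (2*q + c + 1)) = {int q + 1}"
  unfolding supp_h_def w_fst w_snd using wp_ne0 by auto

lemma fin_w: "c < 2 \<Longrightarrow> fin_supp (w_vec (2*q + c + 1))"
  unfolding fin_supp_def supp_w by simp

lemma ft_single: "ft (\<lambda>x. if x = t then u else 0) \<xi> = (if u = 0 then 0 else u * exp (\<i> * of_int t * of_real \<xi>))"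
proof (cases "u = 0")
  case True then show ?thesis by (simp add: ft_def)
next
  case False
  then have "{x. (if x = t then u else 0) \<noteq> 0} = {t}" by auto
  then show ?thesis using False by (simp add: ft_def)
qed

lemma ft_wp: assumes "c < 2" shows "ft (fst (w_vec (2*q + c + 1))) \<xi> = wp c * exp (\<i> * of_int (int q + 1) * of_real \<xi>)"
  unfolding w_fst[OF assms] ft_single using wp_ne0 by simp
lemma ft_wm: assumes "c < 2" shows "ft (snd (w_vec (2*q + c + 1))) \<xi> = wm c * exp (\<i> * of_int (int q + 1) * of_real \<xi>)"
  unfolding w_snd[OF assms] ft_single using wm_ne0 by simp

lemma FC_two: "fourier_coeff (\<lambda>\<xi>. A \<xi> * (u * exp (\<i> * of_int t * of_real \<xi>)) + B \<xi> * (v * exp (\<i> * of_int t * of_real \<xi>))) x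
   = fourier_coeff (\<lambda>\<xi>. A \<xi> * u + B \<xi> * v) (x - t)"
proof -
  have "(\<lambda>\<xi>. A \<xi> * (u * exp (\<i> * of_int t * of_real \<xi>)) + B \<xi> * (v * exp (\<i> * of_int t * of_real \<xi>)))
      = (\<lambda>\<xi>. (A \<xi> * u + B \<xi> * v) * exp (\<i> * of_int t * of_real \<xi>))"
    by (simp add: algebra_simps)
  then show ?thesis by (simp add: FC_shift)
qed

lemma S_fst: "c < 2 \<Longrightarrow> fst (S_op s (w_vec (2*q + c + 1))) x =
   fourier_coeff (\<lambda>\<xi>. s \<xi> 0 0 * wp c + s \<xi> 0 1 * wm c) (x - (int q + 1))"
  unfolding S_op_def fst_conv by (simp only: ft_wp ft_wm FC_two)

lemma S_snd: "c < 2 \<Longrightarrow> snd (S_op s (w_vec (2*q + c + 1))) x =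
   fourier_coeff (\<lambda>\<xi>. s \<xi> 1 0 * wp c + s \<xi> 1 1 * wm c) (x - (int q + 1))"
  unfolding S_op_def snd_conv by (simp only: ft_wp ft_wm FC_two)

lemma inner_w: assumes r: "r < 2" shows "inner_h (w_vec (2*p + r + 1)) g = cnj (wp r) * fst g (int p + 1) + cnj (wm r) * snd g (int p + 1)"
  unfolding inner_h_def supp_w[OF r] w_fst[OF r] w_snd[OF r] by simp

lemma Bop_w: assumes r: "r < 2" shows "Bop sc st b (w_vec (2*p + r + 1)) = sc (wp r) * st (b (int p + 1)) + sc (wm r) * b (int p + 1)"
  unfolding Bop_def supp_w[OF r] w_fst[OF r] w_snd[OF r] by simp

lemma st_Bop_w:
  assumes sa: "star_algebra sc st" and r: "r < 2"
  shows "st (Bop sc st b (w_vec (2*p + r + 1))) = Bop sc st b (w_vec (2*p + r + 1))"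
proof -
  from sa have add: "\<And>x y. st (x + y) = st x + st y" and mul: "\<And>x y. st (x * y) = st y * st x"
    and inv: "\<And>x. st (st x) = x" and sc: "\<And>c. st (sc c) = sc (cnj c)" and com: "\<And>c x. sc c * x = x * sc c"
    unfolding star_algebra_def by auto
  show ?thesis unfolding Bop_w[OF r] add mul inv sc cnj_wp cnj_wm
    by (simp add: com add.commute)
qed

lemma PI_cmult_right: "PI f \<Longrightarrow> PI (\<lambda>\<xi>. f \<xi> * c)"
  using PI_cmult[of f c] by (simp add: mult.commute)

lemma PI_s_mat: "PI (\<lambda>\<xi>. s_mat bL bR gam lam \<xi> r c)"
proof -
  consider "r = 0 \<and> c = 0" | "r = 0 \<and> c = 1" | "r = 1 \<and> c = 0" | "r = 1 \<and> c = 1" | "\<not> (r < 2 \<and> c < 2)"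
    by linarith
  then show ?thesis
  proof cases
    case 1
    then have "(\<lambda>\<xi>. s_mat bL bR gam lam \<xi> r c) = (\<lambda>\<xi>. complex_of_real (s0 bL bR gam lam \<xi>) + complex_of_real (s3 bL bR gam lam \<xi>))"
      by (simp add: s_mat_def Let_def)
    then show ?thesis using PI_add[OF PI_s0 PI_s3] by simp
  next
    case 2
    then have "(\<lambda>\<xi>. s_mat bL bR gam lam \<xi> r c) = (\<lambda>\<xi>. (- \<i>) * complex_of_real (s2 bL bR gam lam \<xi>))"
      by (simp add: s_mat_def Let_def s1_def)
    then show ?thesis using PI_cmult[OF PI_s2, where c="- \<i>"] by simp
  next
    case 3
    then have "(\<lambda>\<xi>. s_mat bL bR gam lam \<xi> r c) = (\<lambda>\<xi>. \<i> * complex_of_real (s2 bL bR gam lam \<xi>))"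
      by (simp add: s_mat_def Let_def s1_def)
    then show ?thesis using PI_cmult[OF PI_s2] by simp
  next
    case 4
    then have "(\<lambda>\<xi>. s_mat bL bR gam lam \<xi> r c) = (\<lambda>\<xi>. complex_of_real (s0 bL bR gam lam \<xi>) + (-1) * complex_of_real (s3 bL bR gam lam \<xi>))"
      by (simp add: s_mat_def Let_def)
    then show ?thesis using PI_add[OF PI_s0 PI_cmult[OF PI_s3, where c="-1"]] by simp
  next
    case 5
    then have "(\<lambda>\<xi>. s_mat bL bR gam lam \<xi> r c) = (\<lambda>\<xi>. 0)"
      by (auto simp: s_mat_def Let_def)
    then show ?thesis using PI_const by simp
  qed
qed

lemma H_00: "cnj (wp 0) * (s_mat bL bR gam lam \<xi> 0 0 * wp 0 + s_mat bL bR gam lam \<xi> 0 1 * wm 0)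
       + cnj (wm 0) * (s_mat bL bR gam lam \<xi> 1 0 * wp 0 + s_mat bL bR gam lam \<xi> 1 1 * wm 0)
       = 1 + \<i> * a_sym bL bR gam lam \<xi> 0 0"
  by (simp add: s_mat_def a_sym_def Let_def s1_def wp_def wm_def algebra_simps)

lemma H_01: "cnj (wp 0) * (s_mat bL bR gam lam \<xi> 0 0 * wp 1 + s_mat bL bR gam lam \<xi> 0 1 * wm 1)
       + cnj (wm 0) * (s_mat bL bR gam lam \<xi> 1 0 * wp 1 + s_mat bL bR gam lam \<xi> 1 1 * wm 1)
       = 0 + \<i> * a_sym bL bR gam lam \<xi> 0 1"
  by (simp add: s_mat_def a_sym_def Let_def s1_def wp_def wm_def algebra_simps)

lemma H_10: "cnj (wp 1) * (s_mat bL bR gam lam \<xi> 0 0 * wp 0 + s_mat bL bR gam lam \<xi> 0 1 * wm 0)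
       + cnj (wm 1) * (s_mat bL bR gam lam \<xi> 1 0 * wp 0 + s_mat bL bR gam lam \<xi> 1 1 * wm 0)
       = 0 + \<i> * a_sym bL bR gam lam \<xi> 1 0"
  by (simp add: s_mat_def a_sym_def Let_def s1_def wp_def wm_def algebra_simps)

lemma H_11: "cnj (wp 1) * (s_mat bL bR gam lam \<xi> 0 0 * wp 1 + s_mat bL bR gam lam \<xi> 0 1 * wm 1)
       + cnj (wm 1) * (s_mat bL bR gam lam \<xi> 1 0 * wp 1 + s_mat bL bR gam lam \<xi> 1 1 * wm 1)
       = 1 + \<i> * a_sym bL bR gam lam \<xi> 1 1"
  by (simp add: s_mat_def a_sym_def Let_def s1_def wp_def wm_def algebra_simps)

lemma H_id:
  assumes "r < 2" "c < 2"
  shows "cnj (wp r) * (s_mat bL bR gam lam \<xi> 0 0 * wp c + s_mat bL bR gam lam \<xi> 0 1 * wm c)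
       + cnj (wm r) * (s_mat bL bR gam lam \<xi> 1 0 * wp c + s_mat bL bR gam lam \<xi> 1 1 * wm c)
       = (if r = c then 1 else 0) + \<i> * a_sym bL bR gam lam \<xi> r c"
proof -
  have "r = 0 \<or> r = 1" "c = 0 \<or> c = 1" using assms by auto
  then show ?thesis
  proof (elim disjE)
    assume "r = 0" "c = 0" then show ?thesis using H_00 by simp
  next
    assume "r = 0" "c = 1" then show ?thesis using H_01 by simp
  next
    assume "r = 1" "c = 0" then show ?thesis using H_10 by simp
  next
    assume "r = 1" "c = 1" then show ?thesis using H_11 by simp
  qed
qed

lemma core1:
  assumes sa: "star_algebra sc st" and qf: "quasi_free sc st b om (s_mat bL bR gam lam)"
    and r: "r < 2" and c: "c < 2"
  shows "om (Bop sc st b (w_vec (2*p + r + 1)) * Bop sc st b (w_vec (2*q + c + 1))) =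
     (if r = c \<and> p = q then 1 else 0) + \<i> * fourier_coeff (\<lambda>\<xi>. a_sym bL bR gam lam \<xi> r c) (int p - int q)"
proof -
  define s where "s = s_mat bL bR gam lam"
  define a where "a = a_sym bL bR gam lam"
  define m where "m = int p - int q"
  define G0 where "G0 = (\<lambda>\<xi>. s \<xi> 0 0 * wp c + s \<xi> 0 1 * wm c)"
  define G1 where "G1 = (\<lambda>\<xi>. s \<xi> 1 0 * wp c + s \<xi> 1 1 * wm c)"
  define H where "H = (\<lambda>\<xi>. cnj (wp r) * G0 \<xi> + cnj (wm r) * G1 \<xi>)"
  define d :: complex where "d = (if r = c then 1 else 0)"
  have PIs: "PI (\<lambda>\<xi>. s \<xi> i j)" for i j unfolding s_def by (rule PI_s_mat)
  have PG0: "PI G0" unfolding G0_def by (intro PI_add PI_cmult_right PIs)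
  have PG1: "PI G1" unfolding G1_def by (intro PI_add PI_cmult_right PIs)
  have PH: "PI H" unfolding H_def by (intro PI_add PI_cmult PG0 PG1)
  have "om (Bop sc st b (w_vec (2*p + r + 1)) * Bop sc st b (w_vec (2*q + c + 1)))
      = om (st (Bop sc st b (w_vec (2*p + r + 1))) * Bop sc st b (w_vec (2*q + c + 1)))"
    using st_Bop_w[OF sa r] by simp
  also have "\<dots> = inner_h (w_vec (2*p + r + 1)) (S_op s (w_vec (2*q + c + 1)))"
    using qf fin_w[OF r] fin_w[OF c] unfolding quasi_free_def s_def by blast
  also have "\<dots> = cnj (wp r) * fourier_coeff G0 m + cnj (wm r) * fourier_coeff G1 m"
  proof -
    have "int p + 1 - (int q + 1) = m" by (simp add: m_def)
    then show ?thesis unfolding inner_w[OF r] S_fst[OF c] S_snd[OF c] G0_def G1_def by simp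
  qed
  also have "\<dots> = fourier_coeff H m"
    unfolding H_def by (simp add: FC_add[OF PI_cmult[OF PG0] PI_cmult[OF PG1]] FC_cmult)
  finally have L: "om (Bop sc st b (w_vec (2*p + r + 1)) * Bop sc st b (w_vec (2*q + c + 1))) = fourier_coeff H m" .
  have "(\<lambda>\<xi>. \<i> * a \<xi> r c) = (\<lambda>\<xi>. H \<xi> - d)"
    unfolding H_def G0_def G1_def a_def s_def d_def using H_id[OF r c] by (simp add: algebra_simps)
  then have "fourier_coeff (\<lambda>\<xi>. \<i> * a \<xi> r c) m = fourier_coeff H m - fourier_coeff (\<lambda>\<xi>. d) m"
    using FC_diff[OF PH PI_const] by simp
  also have "fourier_coeff (\<lambda>\<xi>. d) m = d * (if m = 0 then 1 else 0)"
    using FC_cmult[of d "\<lambda>\<xi>. 1" m] FC_one[of m] by simp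
  finally have R: "\<i> * fourier_coeff (\<lambda>\<xi>. a \<xi> r c) m = fourier_coeff H m - d * (if m = 0 then 1 else 0)"
    by (simp add: FC_cmult)
  show ?thesis unfolding L using R unfolding a_def[symmetric] m_def[symmetric] d_def
    by (auto simp: m_def)
qed

lemma integral_refl2pi:
  fixes f :: "real \<Rightarrow> complex"
  shows "integral {0..2*pi} (\<lambda>\<xi>. f (2*pi - \<xi>)) = integral {0..2*pi} f"
proof -
  have "integral {0..2*pi} ((\<lambda>x. f (-x)) \<circ> (+) (-(2*pi))) = integral {0 + -(2*pi)..2*pi + -(2*pi)} (\<lambda>x. f (-x))"
    by (rule integral_shift_Icc_real)
  also have "{0 + -(2*pi)..2*pi + -(2*pi)} = {-(2*pi)..-0}" by simp
  also have "integral {-(2*pi)..-(0::real)} (\<lambda>x. f (-x)) = integral {0..2*pi} f"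
    using Henstock_Kurzweil_Integration.integral_reflect_real[of "2*pi" "0::real" f] by simp
  also have "((\<lambda>x. f (-x)) \<circ> (+) (-(2*pi))) = (\<lambda>\<xi>. f (2*pi - \<xi>))"
    by (rule ext) (simp add: o_def)
  finally show ?thesis .
qed

lemma exp_refl: "exp (\<i> * of_int m * of_real (2*pi - \<xi>)) = exp (- \<i> * of_int m * of_real \<xi>)"
proof -
  have "\<i> * of_int m * of_real (2*pi - \<xi>) = (2 * of_int m * of_real pi) * \<i> + (- \<i> * of_int m * of_real \<xi>)"
    by (simp add: algebra_simps)
  then show ?thesis using exp_integer_2pi[of "of_int m"] by (simp add: exp_diff exp_minus divide_inverse)
qed

lemma FC_neg_refl: "fourier_coeff f (-m) = fourier_coeff (\<lambda>\<xi>. f (2*pi - \<xi>)) m"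
proof -
  have "integral {0..2*pi} (\<lambda>\<xi>. f \<xi> * exp (- \<i> * of_int (-m) * of_real \<xi>))
      = integral {0..2*pi} (\<lambda>\<xi>. f (2*pi - \<xi>) * exp (- \<i> * of_int (-m) * of_real (2*pi - \<xi>)))"
    by (rule integral_refl2pi[symmetric])
  also have "(\<lambda>\<xi>. f (2*pi - \<xi>) * exp (- \<i> * of_int (-m) * of_real (2*pi - \<xi>)))
      = (\<lambda>\<xi>. f (2*pi - \<xi>) * exp (- \<i> * of_int m * of_real \<xi>))"
  proof (rule ext)
    fix \<xi>
    have "- \<i> * of_int (-m) * of_real (2*pi - \<xi>) = \<i> * of_int m * of_real (2*pi - \<xi>)" by simp
    then show "f (2*pi - \<xi>) * exp (- \<i> * of_int (-m) * of_real (2*pi - \<xi>)) = f (2*pi - \<xi>) * exp (- \<i> * of_int m * of_real \<xi>)"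
      using exp_refl[of m \<xi>] by simp
  qed
  finally show ?thesis unfolding fourier_coeff_def by simp
qed

lemma FC_cnj_refl: "cnj (fourier_coeff f m) = fourier_coeff (\<lambda>\<xi>. cnj (f (2*pi - \<xi>))) m"
proof -
  have e: "cnj (f \<xi> * exp (- \<i> * of_int m * of_real \<xi>)) = cnj (f \<xi>) * exp (\<i> * of_int m * of_real \<xi>)" for \<xi>
    by (simp add: exp_cnj)
  have "cnj (integral {0..2*pi} (\<lambda>\<xi>. f \<xi> * exp (- \<i> * of_int m * of_real \<xi>)))
      = integral {0..2*pi} (\<lambda>\<xi>. cnj (f \<xi>) * exp (\<i> * of_int m * of_real \<xi>))"
    by (simp only: integral_cnj e)
  also have "\<dots> = integral {0..2*pi} (\<lambda>\<xi>. cnj (f (2*pi - \<xi>)) * exp (\<i> * of_int m * of_real (2*pi - \<xi>)))"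
    by (rule integral_refl2pi[symmetric])
  also have "\<dots> = integral {0..2*pi} (\<lambda>\<xi>. cnj (f (2*pi - \<xi>)) * exp (- \<i> * of_int m * of_real \<xi>))"
    by (simp only: exp_refl)
  finally show ?thesis unfolding fourier_coeff_def by simp
qed

lemma mu_refl: "mu gam lam (2*pi - \<xi>) = mu gam lam \<xi>"
  by (simp add: mu_def)

lemma kappa_refl: "kappa gam lam (2*pi - \<xi>) = - kappa gam lam \<xi>"
proof -
  have "sin (2 * (2*pi - \<xi>)) = - sin (2*\<xi>)"
  proof -
    have "2 * (2*pi - \<xi>) = (2*pi - 2*\<xi>) + 2*pi" by simp
    then show ?thesis by (simp only: sin_periodic sin_2pi_minus)
  qed
  then show ?thesis by (simp add: kappa_def)
qed

lemma s0_refl: "s0 bL bR gam lam (2*pi - \<xi>) = 1 - s0 bL bR gam lam \<xi>"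
  by (simp add: s0_def mu_refl kappa_refl sgn_minus)
lemma s2_refl: "s2 bL bR gam lam (2*pi - \<xi>) = - s2 bL bR gam lam \<xi>"
  by (simp add: s2_def mu_refl)
lemma s3_refl: "s3 bL bR gam lam (2*pi - \<xi>) = s3 bL bR gam lam \<xi>"
  by (simp add: s3_def mu_refl)

lemma a_refl_00: "a_sym bL bR gam lam (2*pi - \<xi>) 0 0 = cnj (a_sym bL bR gam lam \<xi> 0 0)"
  unfolding a_sym_def Let_def s0_refl s2_refl s3_refl by (simp add: algebra_simps)
lemma a_refl_01: "a_sym bL bR gam lam (2*pi - \<xi>) 0 1 = cnj (a_sym bL bR gam lam \<xi> 0 1)"
  unfolding a_sym_def Let_def s0_refl s2_refl s3_refl by (simp add: algebra_simps)
lemma a_refl_10: "a_sym bL bR gam lam (2*pi - \<xi>) 1 0 = cnj (a_sym bL bR gam lam \<xi> 1 0)"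
  unfolding a_sym_def Let_def s0_refl s2_refl s3_refl by (simp add: algebra_simps)
lemma a_refl_11: "a_sym bL bR gam lam (2*pi - \<xi>) 1 1 = cnj (a_sym bL bR gam lam \<xi> 1 1)"
  unfolding a_sym_def Let_def s0_refl s2_refl s3_refl by (simp add: algebra_simps)
lemma a_swap_00: "cnj (a_sym bL bR gam lam \<xi> 0 0) = - a_sym bL bR gam lam \<xi> 0 0"
  by (simp add: a_sym_def Let_def algebra_simps)
lemma a_swap_01: "cnj (a_sym bL bR gam lam \<xi> 1 0) = - a_sym bL bR gam lam \<xi> 0 1"
  by (simp add: a_sym_def Let_def algebra_simps)
lemma a_swap_10: "cnj (a_sym bL bR gam lam \<xi> 0 1) = - a_sym bL bR gam lam \<xi> 1 0"
  by (simp add: a_sym_def Let_def algebra_simps)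
lemma a_swap_11: "cnj (a_sym bL bR gam lam \<xi> 1 1) = - a_sym bL bR gam lam \<xi> 1 1"
  by (simp add: a_sym_def Let_def algebra_simps)

lemma a_refl:
  assumes "r < 2" "c < 2"
  shows "a_sym bL bR gam lam (2*pi - \<xi>) r c = cnj (a_sym bL bR gam lam \<xi> r c)"
proof -
  have "r = 0 \<or> r = 1" "c = 0 \<or> c = 1" using assms by auto
  then show ?thesis using a_refl_00 a_refl_01 a_refl_10 a_refl_11 by auto
qed

lemma a_swap:
  assumes "r < 2" "c < 2"
  shows "cnj (a_sym bL bR gam lam \<xi> c r) = - a_sym bL bR gam lam \<xi> r c"
proof -
  have "r = 0 \<or> r = 1" "c = 0 \<or> c = 1" using assms by auto
  then show ?thesis using a_swap_00 a_swap_01 a_swap_10 a_swap_11 by auto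
qed

lemma decomp:
  assumes "1 \<le> (k::nat)"
  shows "k = 2 * ((k - 1) div 2) + (k - 1) mod 2 + 1" "(k - 1) mod 2 < 2"
  using assms by auto

theorem lemma1:
  fixes sc :: "complex \<Rightarrow> 'a::ring_1" and st :: "'a \<Rightarrow> 'a" and b :: "int \<Rightarrow> 'a"
    and om :: "'a \<Rightarrow> complex"
    and bL bR gam lam :: real and n :: nat
  assumes "bL > 0" and "bR > 0" and "-1 < gam" and "gam < 1"
    and "star_algebra sc st" and "CAR_generators sc st b" and "is_state sc st om"
    and "quasi_free sc st b om (s_mat bL bR gam lam)"
  shows "(\<forall>k l. 1 \<le> k \<and> k \<le> 2*n \<and> 1 \<le> l \<and> l \<le> 2*n \<longrightarrow>
            om (Bop sc st b (w_vec k) * Bop sc st b (w_vec l)) =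
              (if k = l then 1 else 0) + \<i> * block_toeplitz 2 n (a_sym bL bR gam lam) k l)
       \<and> (\<forall>k l. 1 \<le> k \<and> k \<le> 2*n \<and> 1 \<le> l \<and> l \<le> 2*n \<longrightarrow>
            block_toeplitz 2 n (a_sym bL bR gam lam) k l \<in> \<real> \<and>
            block_toeplitz 2 n (a_sym bL bR gam lam) l k = - block_toeplitz 2 n (a_sym bL bR gam lam) k l)"
proof (intro conjI allI impI)
  fix k l :: nat
  assume H: "1 \<le> k \<and> k \<le> 2*n \<and> 1 \<le> l \<and> l \<le> 2*n"
  define p where "p = (k - 1) div 2"
  define r where "r = (k - 1) mod 2"
  define q where "q = (l - 1) div 2"
  define c where "c = (l - 1) mod 2"
  have kk: "k = 2*p + r + 1" and r2: "r < 2" using decomp[of k] H unfolding p_def r_def by auto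
  have ll: "l = 2*q + c + 1" and c2: "c < 2" using decomp[of l] H unfolding q_def c_def by auto
  have B: "block_toeplitz 2 n (a_sym bL bR gam lam) k l = fourier_coeff (\<lambda>\<xi>. a_sym bL bR gam lam \<xi> r c) (int p - int q)"
    unfolding block_toeplitz_def p_def q_def r_def c_def by simp
  have B': "block_toeplitz 2 n (a_sym bL bR gam lam) l k = fourier_coeff (\<lambda>\<xi>. a_sym bL bR gam lam \<xi> c r) (int q - int p)"
    unfolding block_toeplitz_def p_def q_def r_def c_def by simp
  {
    have eq: "(k = l) = (r = c \<and> p = q)" using kk ll r2 c2 by presburger
    have L: "om (Bop sc st b (w_vec k) * Bop sc st b (w_vec l)) =
       (if r = c \<and> p = q then 1 else 0) + \<i> * fourier_coeff (\<lambda>\<xi>. a_sym bL bR gam lam \<xi> r c) (int p - int q)"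
      using core1[OF assms(5) assms(8) r2 c2, where p=p and q=q] by (simp only: kk ll)
    show "om (Bop sc st b (w_vec k) * Bop sc st b (w_vec l)) =
              (if k = l then 1 else 0) + \<i> * block_toeplitz 2 n (a_sym bL bR gam lam) k l"
      unfolding L B eq ..
  }
  {
    define m where "m = int p - int q"
    have "cnj (fourier_coeff (\<lambda>\<xi>. a_sym bL bR gam lam \<xi> r c) m)
        = fourier_coeff (\<lambda>\<xi>. cnj (a_sym bL bR gam lam (2*pi - \<xi>) r c)) m"
      by (rule FC_cnj_refl)
    also have "\<dots> = fourier_coeff (\<lambda>\<xi>. a_sym bL bR gam lam \<xi> r c) m"
      by (simp only: a_refl[OF r2 c2] complex_cnj_cnj)
    finally show "block_toeplitz 2 n (a_sym bL bR gam lam) k l \<in> \<real>"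
      unfolding B m_def[symmetric] Reals_cnj_iff .
  }
  {
    define m where "m = int p - int q"
    have "int q - int p = - m" by (simp add: m_def)
    then have "block_toeplitz 2 n (a_sym bL bR gam lam) l k = fourier_coeff (\<lambda>\<xi>. a_sym bL bR gam lam \<xi> c r) (- m)"
      unfolding B' by simp
    also have "\<dots> = fourier_coeff (\<lambda>\<xi>. a_sym bL bR gam lam (2*pi - \<xi>) c r) m"
      by (rule FC_neg_refl)
    also have "\<dots> = fourier_coeff (\<lambda>\<xi>. (-1) * a_sym bL bR gam lam \<xi> r c) m"
      by (simp only: a_refl[OF c2 r2] a_swap[OF r2 c2] mult_minus1)
    also have "\<dots> = - fourier_coeff (\<lambda>\<xi>. a_sym bL bR gam lam \<xi> r c) m"
      using FC_cmult[of "-1" "\<lambda>\<xi>. a_sym bL bR gam lam \<xi> r c" m] by simp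
    finally show "block_toeplitz 2 n (a_sym bL bR gam lam) l k = - block_toeplitz 2 n (a_sym bL bR gam lam) k l"
      unfolding B m_def .
  }
qed

end
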